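(* With notation as in the context, $\mathrm{REL}(\Gamma)=\mathrm{REL}_{\mathcal{W}}$.
   Context: $\Gamma$ is a geometrically finite, non-cocompact Fuchsian group acting on the upper half-plane $\mathbb{H}$, containing hyperbolic but no parabolic elements, with $\Gamma\backslash\mathbb{H}$ of infinite area, and whose ordinary set contains a neighborhood of $\infty$. For $g=\begin{bmatrix}a&b\\c&d\end{bmatrix}\in\mathrm{PSL}_2(\mathbb{R})$ with $c\neq0$ let $\mathrm{I}(g)=\{z\in\mathbb{H}:|cz+d|=1\}$ and $\mathrm{ext}\,\mathrm{I}(g)=\{z:|cz+d|>1\}$. Let $\mathcal{K}=\bigcap_{g\in\Gamma\setminus\{\mathrm{id}\}}\mathrm{ext}\,\mathrm{I}(g)$ and $\mathrm{REL}(\Gamma)$ the set of $\mathrm{I}(g)$, $g\in\Gamma\setminus\{\mathrm{id}\}$, such that $\mathrm{I}(g)\cap\partial\mathcal{K}$ contains more than one point ($\partial$ = boundary in $\mathbb{H}$); $\Gamma_{\mathrm{REL}}$ is the set of such $g$. With $\mathrm{pr}_\infty(x+iy)=x$, let $\alpha$ (resp. $\beta$) be the largest (resp. smallest) real number with $\partial\mathcal{K}\subseteq\mathrm{pr}_\infty^{-1}([\alpha,\beta])$, fix $\alpha'<\alpha$, $\beta'>\beta$, $\lambda=\beta'-\alpha'$, $t_\lambda=\begin{bmatrix}1&\lambda\\0&1\end{bmatrix}$, $\mathcal{W}=\mathcal{K}\cap\mathrm{pr}_\infty^{-1}((\alpha',\beta'))$, and $\Gamma_{\mathcal{W}}$ the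 group generated by $\Gamma_{\mathrm{REL}}\cup\{t_\lambda\}$ (a Fuchsian group). $\mathrm{REL}_{\mathcal{W}}$ is the set of isometric spheres $\mathrm{I}(g)$, $g\in\Gamma_{\mathcal{W}}$ not fixing $\infty$, such that $\mathrm{I}(g)\cap\partial\mathcal{W}$ contains more than one point. *)

theory Defs
  imports "HOL-Analysis.Analysis"
begin

text \<open>Elements of SL(2,R) are quadruples (a,b,c,d) standing for the matrix [a b; c d].
  A Fuchsian group (subgroup of PSL(2,R)) is represented by its full preimage in SL(2,R),
  i.e. a subgroup containing -I; g is the identity of PSL(2,R) iff g = I or g = -I.\<close>

type_synonym mat2 = "real \<times> real \<times> real \<times> real"

definition SL2 :: "mat2 set" where
  "SL2 = {(a,b,c,d). a*d - b*c = 1}"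

definition mid :: mat2 where "mid = (1,0,0,1)"

definition mneg :: "mat2 \<Rightarrow> mat2" where
  "mneg = (\<lambda>(a,b,c,d). (-a,-b,-c,-d))"

definition mmul :: "mat2 \<Rightarrow> mat2 \<Rightarrow> mat2" where
  "mmul = (\<lambda>(a,b,c,d) (a',b',c',d'). (a*a' + b*c', a*b' + b*d', c*a' + d*c', c*b' + d*d'))"

definition minv :: "mat2 \<Rightarrow> mat2" where
  "minv = (\<lambda>(a,b,c,d). (d,-b,-c,a))"

definition mtrace :: "mat2 \<Rightarrow> real" where
  "mtrace = (\<lambda>(a,b,c,d). a + d)"

definition mc :: "mat2 \<Rightarrow> real" where "mc = (\<lambda>(a,b,c,d). c)"
definition md :: "mat2 \<Rightarrow> real" where "md = (\<lambda>(a,b,c,d). d)"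

definition is_id_psl :: "mat2 \<Rightarrow> bool" where
  "is_id_psl g \<longleftrightarrow> g = mid \<or> g = mneg mid"

definition mob :: "mat2 \<Rightarrow> complex \<Rightarrow> complex" where
  "mob = (\<lambda>(a,b,c,d) z. (of_real a * z + of_real b) / (of_real c * z + of_real d))"

definition uhp :: "complex set" where "uhp = {z. Im z > 0}"

definition fuchsian_group :: "mat2 set \<Rightarrow> bool" where
  "fuchsian_group G \<longleftrightarrow> G \<subseteq> SL2 \<and> mid \<in> G \<and> mneg mid \<in> G
     \<and> (\<forall>g\<in>G. \<forall>h\<in>G. mmul g h \<in> G) \<and> (\<forall>g\<in>G. minv g \<in> G)
     \<and> (\<forall>g\<in>G. \<exists>e>0. \<forall>h\<in>G. dist h g < e \<longrightarrow> h = g)"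

definition hyperbolic_elt :: "mat2 \<Rightarrow> bool" where
  "hyperbolic_elt g \<longleftrightarrow> \<bar>mtrace g\<bar> > 2"

definition parabolic_elt :: "mat2 \<Rightarrow> bool" where
  "parabolic_elt g \<longleftrightarrow> \<bar>mtrace g\<bar> = 2 \<and> \<not> is_id_psl g"

definition hdist :: "complex \<Rightarrow> complex \<Rightarrow> real" where
  "hdist z w = arcosh (1 + (cmod (z - w))\<^sup>2 / (2 * Im z * Im w))"

definition more_than_one :: "'a set \<Rightarrow> bool" where
  "more_than_one S \<longleftrightarrow> (\<exists>z\<in>S. \<exists>w\<in>S. z \<noteq> w)"

definition dirichlet :: "mat2 set \<Rightarrow> complex \<Rightarrow> complex set" where
  "dirichlet G p = {z \<in> uhp. \<forall>g\<in>G. hdist z p \<le> hdist z (mob g p)}"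

definition trivial_stabilizer :: "mat2 set \<Rightarrow> complex \<Rightarrow> bool" where
  "trivial_stabilizer G p \<longleftrightarrow> (\<forall>g\<in>G. mob g p = p \<longrightarrow> is_id_psl g)"

text \<open>Elements g whose bisector between p and g p carries a side of the Dirichlet polygon.\<close>
definition dirichlet_side_elts :: "mat2 set \<Rightarrow> complex \<Rightarrow> mat2 set" where
  "dirichlet_side_elts G p = {g \<in> G. mob g p \<noteq> p \<and>
     more_than_one {z \<in> dirichlet G p. hdist z p = hdist z (mob g p)}}"

definition geometrically_finite :: "mat2 set \<Rightarrow> bool" where
  "geometrically_finite G \<longleftrightarrow>
     (\<exists>p\<in>uhp. trivial_stabilizer G p \<and> finite (dirichlet_side_elts G p))"

definition harea :: "complex set \<Rightarrow> ennreal" where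
  "harea S = (\<integral>\<^sup>+ z. ennreal (indicator S z / (Im z)\<^sup>2) \<partial>lborel)"

definition quotient_infinite_area :: "mat2 set \<Rightarrow> bool" where
  "quotient_infinite_area G \<longleftrightarrow>
     (\<exists>p\<in>uhp. trivial_stabilizer G p \<and> harea (dirichlet G p) = \<infinity>)"

text \<open>Gamma\H is compact iff some compact subset of H has Gamma-translates covering H.\<close>
definition cocompact :: "mat2 set \<Rightarrow> bool" where
  "cocompact G \<longleftrightarrow> (\<exists>C. compact C \<and> C \<subseteq> uhp \<and> uhp \<subseteq> (\<Union>g\<in>G. mob g ` C))"

definition orbit :: "mat2 set \<Rightarrow> complex \<Rightarrow> complex set" where
  "orbit G z = (\<lambda>g. mob g z) ` G"

text \<open>Limit set: accumulation points of an orbit, split into its real part and the point infinity.\<close>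
definition real_limit_set :: "mat2 set \<Rightarrow> real set" where
  "real_limit_set G = {x. complex_of_real x islimpt orbit G \<i>}"

definition infty_in_limit_set :: "mat2 set \<Rightarrow> bool" where
  "infty_in_limit_set G \<longleftrightarrow> \<not> bounded (orbit G \<i>)"

definition ordinary_set_nbhd_infty :: "mat2 set \<Rightarrow> bool" where
  "ordinary_set_nbhd_infty G \<longleftrightarrow> \<not> infty_in_limit_set G \<and>
     (\<exists>R. \<forall>x. \<bar>x\<bar> > R \<longrightarrow> x \<notin> real_limit_set G)"

text \<open>Isometric spheres (only for c \<noteq> 0) and their exteriors.\<close>
definition isom_sphere :: "mat2 \<Rightarrow> complex set" where
  "isom_sphere g = {z \<in> uhp. cmod (of_real (mc g) * z + of_real (md g)) = 1}"

definition isom_ext :: "mat2 \<Rightarrow> complex set" where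
  "isom_ext g = {z \<in> uhp. cmod (of_real (mc g) * z + of_real (md g)) > 1}"

definition Kset :: "mat2 set \<Rightarrow> complex set" where
  "Kset G = uhp \<inter> \<Inter> {isom_ext g | g. g \<in> G \<and> \<not> is_id_psl g \<and> mc g \<noteq> 0}"

definition bdryH :: "complex set \<Rightarrow> complex set" where
  "bdryH S = frontier S \<inter> uhp"

definition Gamma_REL :: "mat2 set \<Rightarrow> mat2 set" where
  "Gamma_REL G = {g \<in> G. \<not> is_id_psl g \<and> mc g \<noteq> 0 \<and>
      more_than_one (isom_sphere g \<inter> bdryH (Kset G))}"

definition REL :: "mat2 set \<Rightarrow> complex set set" where
  "REL G = isom_sphere ` Gamma_REL G"

inductive_set gen_group :: "mat2 set \<Rightarrow> mat2 set" for S where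
  gen_id: "mid \<in> gen_group S"
| gen_base: "s \<in> S \<Longrightarrow> s \<in> gen_group S"
| gen_mul: "x \<in> gen_group S \<Longrightarrow> y \<in> gen_group S \<Longrightarrow> mmul x y \<in> gen_group S"
| gen_inv: "x \<in> gen_group S \<Longrightarrow> minv x \<in> gen_group S"

definition Wset :: "mat2 set \<Rightarrow> real \<Rightarrow> real \<Rightarrow> complex set" where
  "Wset G a' b' = Kset G \<inter> {z. a' < Re z \<and> Re z < b'}"

definition translation :: "real \<Rightarrow> mat2" where
  "translation l = (1, l, 0, 1)"

definition Gamma_W :: "mat2 set \<Rightarrow> real \<Rightarrow> real \<Rightarrow> mat2 set" where
  "Gamma_W G a' b' = gen_group (insert (translation (b' - a')) (Gamma_REL G))"

definition REL_W :: "mat2 set \<Rightarrow> real \<Rightarrow> real \<Rightarrow> complex set set" where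
  "REL_W G a' b' = {isom_sphere g | g. g \<in> Gamma_W G a' b' \<and> mc g \<noteq> 0 \<and>
      more_than_one (isom_sphere g \<inter> bdryH (Wset G a' b'))}"

end

theory Submission
  imports Defs
begin


definition jf :: "mat2 \<Rightarrow> complex \<Rightarrow> complex" where
  "jf g z = of_real (mc g) * z + of_real (md g)"

lemma mmul_assoc: "mmul (mmul x y) z = mmul x (mmul y z)"
  by (cases x; cases y; cases z) (simp add: mmul_def algebra_simps)

lemma mmul_mid_right[simp]: "mmul x mid = x"
  by (cases x) (simp add: mmul_def mid_def)

lemma mmul_mid_left[simp]: "mmul mid x = x"
  by (cases x) (simp add: mmul_def mid_def)

lemma mneg_mneg[simp]: "mneg (mneg x) = x"
  by (cases x) (simp add: mneg_def)

lemma mmul_mneg_left: "mmul (mneg x) y = mneg (mmul x y)"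
  by (cases x; cases y) (simp add: mmul_def mneg_def)

lemma mmul_mneg_right: "mmul x (mneg y) = mneg (mmul x y)"
  by (cases x; cases y) (simp add: mmul_def mneg_def)

lemma mneg_eq_mmul: "mneg x = mmul (mneg mid) x"
  by (cases x) (simp add: mmul_def mneg_def mid_def)

lemma translation_add: "mmul (translation a) (translation b) = translation (a + b)"
  by (simp add: mmul_def translation_def)

lemma translation_0: "translation 0 = mid"
  by (simp add: translation_def mid_def)

lemma minv_translation: "minv (translation a) = translation (- a)"
  by (simp add: minv_def translation_def)

lemma minv_mneg: "minv (mneg x) = mneg (minv x)"
  by (cases x) (simp add: minv_def mneg_def)

lemma minv_mmul: "minv (mmul x y) = mmul (minv y) (minv x)"
  by (cases x; cases y) (simp add: minv_def mmul_def algebra_simps)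

lemma minv_minv[simp]: "minv (minv x) = x"
  by (cases x) (simp add: minv_def)

lemma mmul_minv_SL2: "x \<in> SL2 \<Longrightarrow> mmul (minv x) x = mid"
  by (cases x) (simp add: minv_def mmul_def SL2_def mid_def algebra_simps)

lemma mmul_minv_SL2': "x \<in> SL2 \<Longrightarrow> mmul x (minv x) = mid"
  by (cases x) (simp add: minv_def mmul_def SL2_def mid_def algebra_simps)

lemma is_id_psl_mneg: "is_id_psl (mneg g) \<longleftrightarrow> is_id_psl g"
  unfolding is_id_psl_def by (metis mneg_mneg)

lemma is_id_psl_minv: "is_id_psl (minv g) \<longleftrightarrow> is_id_psl g"
proof -
  obtain a b c d where gd: "g = (a,b,c,d)" by (cases g)
  show ?thesis by (simp add: gd minv_def mid_def mneg_def is_id_psl_def) (metis add.inverse_inverse neg_0_equal_iff_equal)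
qed

lemma mc_mneg[simp]: "mc (mneg g) = - mc g" and md_mneg[simp]: "md (mneg g) = - md g"
  by (cases g; simp add: mc_def md_def mneg_def)+

lemma mc_minv[simp]: "mc (minv g) = - mc g"
  by (cases g) (simp add: mc_def minv_def)

lemma mc_translation[simp]: "mc (translation l) = 0" and md_translation[simp]: "md (translation l) = 1"
  by (simp_all add: mc_def md_def translation_def)

lemma mc_mid[simp]: "mc mid = 0" by (simp add: mc_def mid_def)

lemma mcd_trans_mul: "mc (mmul (translation l) g) = mc g" "md (mmul (translation l) g) = md g"
  by (cases g; simp add: mc_def md_def mmul_def translation_def)+

lemma jf_mneg: "jf (mneg g) z = - jf g z"
  by (simp add: jf_def algebra_simps)

lemma jf_translation[simp]: "jf (translation l) z = 1"
  by (simp add: jf_def)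

lemma Im_mob: "g \<in> SL2 \<Longrightarrow> Im (mob g z) = Im z / (cmod (jf g z))\<^sup>2"
proof -
  assume g: "g \<in> SL2"
  obtain a b c d where gd: "g = (a,b,c,d)" by (cases g)
  with g have det: "a*d - b*c = 1" by (simp add: SL2_def)
  have "Im (mob g z) = Im ((of_real a * z + of_real b) / (of_real c * z + of_real d))"
    by (simp add: mob_def gd)
  also have "\<dots> = Im z / (cmod (of_real c * z + of_real d))\<^sup>2"
  proof -
    have num: "a * Im z * (c * Re z + d) - (a * Re z + b) * (c * Im z) = Im z"
      using det by (simp add: algebra_simps) (metis mult.commute mult.left_commute mult_1_right distrib_left diff_add_cancel)
    show ?thesis unfolding Im_divide cmod_power2 using num by simp
  qed
  finally show ?thesis by (simp add: jf_def gd mc_def md_def)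
qed

lemma jf_nonzero: "g \<in> SL2 \<Longrightarrow> Im z > 0 \<Longrightarrow> jf g z \<noteq> 0"
proof -
  assume g: "g \<in> SL2" and z: "Im z > 0"
  obtain a b c d where gd: "g = (a,b,c,d)" by (cases g)
  with g have det: "a*d - b*c = 1" by (simp add: SL2_def)
  show ?thesis
  proof
    assume "jf g z = 0"
    then have "c * Im z = 0" "c * Re z + d = 0"
      by (auto simp add: jf_def gd mc_def md_def complex_eq_iff)
    then have "c = 0" "d = 0" using z by auto
    with det show False by simp
  qed
qed

lemma mob_uhp: "g \<in> SL2 \<Longrightarrow> z \<in> uhp \<Longrightarrow> mob g z \<in> uhp"
  using Im_mob[of g z] jf_nonzero[of g z] by (simp add: uhp_def)

lemma jf_mmul: "g \<in> SL2 \<Longrightarrow> h \<in> SL2 \<Longrightarrow> Im z > 0 \<Longrightarrow> jf (mmul g h) z = jf g (mob h z) * jf h z"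
proof -
  assume g: "g \<in> SL2" and h: "h \<in> SL2" and z: "Im z > 0"
  have nz: "jf h z \<noteq> 0" using jf_nonzero[OF h z] .
  obtain a b c d where gd: "g = (a,b,c,d)" by (cases g)
  obtain a' b' c' d' where hd: "h = (a',b',c',d')" by (cases h)
  have nz': "of_real c' * z + of_real d' \<noteq> 0" using nz by (simp add: jf_def hd mc_def md_def)
  show ?thesis using nz'
    by (simp add: jf_def gd hd mc_def md_def mmul_def mob_def field_simps)
qed

lemma SL2_mmul: "g \<in> SL2 \<Longrightarrow> h \<in> SL2 \<Longrightarrow> mmul g h \<in> SL2"
proof -
  assume "g \<in> SL2" "h \<in> SL2"
  moreover obtain a b c d where "g = (a,b,c,d)" by (cases g)
  moreover obtain a' b' c' d' where "h = (a',b',c',d')" by (cases h)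
  moreover have "(a * a' + b * c') * (c * b' + d * d') - (a * b' + b * d') * (c * a' + d * c')
     = (a*d - b*c) * (a'*d' - b'*c')" by (simp add: algebra_simps)
  ultimately show ?thesis by (simp add: SL2_def mmul_def)
qed

lemma SL2_minv: "g \<in> SL2 \<Longrightarrow> minv g \<in> SL2"
  by (cases g) (simp add: SL2_def minv_def algebra_simps)

lemma SL2_translation: "translation l \<in> SL2"
  by (simp add: SL2_def translation_def)

lemma SL2_mneg: "g \<in> SL2 \<Longrightarrow> mneg g \<in> SL2"
  by (cases g) (simp add: SL2_def mneg_def)

lemma jf_minv_mob: "g \<in> SL2 \<Longrightarrow> Im z > 0 \<Longrightarrow> jf (minv g) (mob g z) * jf g z = 1"
  using jf_mmul[of "minv g" g z] SL2_minv[of g] mmul_minv_SL2[of g]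
  by (simp add: jf_def mid_def mc_def md_def)

lemma Re_mob_translation: "Re (mob (translation l) z) = Re z + l"
  by (simp add: mob_def translation_def)



inductive nf :: "mat2 set \<Rightarrow> real \<Rightarrow> nat \<Rightarrow> mat2 \<Rightarrow> bool" for G l where
  nf0: "nf G l 0 (translation (of_int k * l))"
| nf0n: "nf G l 0 (mneg (translation (of_int k * l)))"
| nfG: "nf G l i y \<Longrightarrow> i \<noteq> 1 \<Longrightarrow> g \<in> G \<Longrightarrow> \<not> is_id_psl g \<Longrightarrow> nf G l 1 (mmul y g)"
| nfT: "nf G l 1 x \<Longrightarrow> k \<noteq> 0 \<Longrightarrow> nf G l 2 (mmul x (translation (of_int k * l)))"

lemma fg_mneg: "fuchsian_group G \<Longrightarrow> g \<in> G \<Longrightarrow> mneg g \<in> G"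
  unfolding fuchsian_group_def by (metis mneg_eq_mmul)

lemma fg_mmul: "fuchsian_group G \<Longrightarrow> g \<in> G \<Longrightarrow> h \<in> G \<Longrightarrow> mmul g h \<in> G"
  unfolding fuchsian_group_def by blast

lemma fg_minv: "fuchsian_group G \<Longrightarrow> g \<in> G \<Longrightarrow> minv g \<in> G"
  unfolding fuchsian_group_def by blast

lemma fg_SL2: "fuchsian_group G \<Longrightarrow> g \<in> G \<Longrightarrow> g \<in> SL2"
  unfolding fuchsian_group_def by blast

lemma nf_mneg: "nf G l i w \<Longrightarrow> fuchsian_group G \<Longrightarrow> nf G l i (mneg w)"
proof (induction rule: nf.induct)
  case (nf0 k) then show ?case using nf.nf0n by blast
next
  case (nf0n k) then show ?case using nf.nf0 by simp
next
  case (nfG i y g)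
  have "mneg (mmul y g) = mmul y (mneg g)" by (simp add: mmul_mneg_right)
  moreover have "nf G l 1 (mmul y (mneg g))"
    using nfG by (intro nf.nfG[where i=i]) (auto simp: fg_mneg is_id_psl_mneg)
  ultimately show ?case by simp
next
  case (nfT x k)
  then show ?case using nf.nfT[where x="mneg x" and k=k] by (simp add: mmul_mneg_left)
qed

lemma nf_T: "nf G l i w \<Longrightarrow> \<exists>j. nf G l j (mmul w (translation (of_int k * l)))"
proof (induction rule: nf.induct)
  case (nf0 m)
  then show ?case using nf.nf0[of G l "m + k"] by (auto simp: translation_add algebra_simps)
next
  case (nf0n m)
  then show ?case using nf.nf0n[of G l "m + k"] by (auto simp: mmul_mneg_left translation_add algebra_simps)
next
  case (nfG i y g)
  show ?case
  proof (cases "k = 0")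
    case True then show ?thesis using nf.nfG[OF nfG.hyps] by (auto simp: translation_0)
  next
    case False then show ?thesis using nf.nfT[OF nf.nfG[OF nfG.hyps] False] by blast
  qed
next
  case (nfT x m)
  have eq: "mmul (mmul x (translation (of_int m * l))) (translation (of_int k * l))
      = mmul x (translation (of_int (m + k) * l))"
    by (simp add: mmul_assoc translation_add algebra_simps)
  show ?case
  proof (cases "m + k = 0")
    case True then show ?thesis using nfT.hyps eq by (auto simp: translation_0)
  next
    case False then show ?thesis using nf.nfT[OF nfT.hyps(1) False] eq by metis
  qed
qed

lemma nf_G: "nf G l i w \<Longrightarrow> fuchsian_group G \<Longrightarrow> g \<in> G \<Longrightarrow> \<exists>j. nf G l j (mmul w g)"
proof (cases "is_id_psl g")
  case True
  assume "nf G l i w" "fuchsian_group G"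
  then show ?thesis using True nf_mneg[of G l i w]
    by (auto simp: is_id_psl_def mneg_eq_mmul[symmetric] mmul_mneg_right)
next
  case False
  assume w: "nf G l i w" and fg: "fuchsian_group G" and g: "g \<in> G"
  show ?thesis
  proof (cases "i = 1")
    case False then show ?thesis using nf.nfG[OF w False g] \<open>\<not> is_id_psl g\<close> by blast
  next
    case True
    from w[unfolded True] obtain i' y h where wy: "w = mmul y h" and y: "nf G l i' y" "i' \<noteq> 1"
      and h: "h \<in> G" "\<not> is_id_psl h"
      by (cases rule: nf.cases) auto
    have hg: "mmul h g \<in> G" using fg h g by (simp add: fg_mmul)
    have eq: "mmul w g = mmul y (mmul h g)" by (simp add: wy mmul_assoc)
    show ?thesis
    proof (cases "is_id_psl (mmul h g)")
      case True then show ?thesis using eq y nf_mneg[OF y(1) fg]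
        by (auto simp: is_id_psl_def mneg_eq_mmul[symmetric] mmul_mneg_right)
    next
      case False then show ?thesis using nf.nfG[OF y hg False] eq by metis
    qed
  qed
qed

lemma nf_mul: "nf G l j y \<Longrightarrow> fuchsian_group G \<Longrightarrow> nf G l i x \<Longrightarrow> \<exists>k. nf G l k (mmul x y)"
proof (induction arbitrary: rule: nf.induct)
  case (nf0 k) then show ?case using nf_T by blast
next
  case (nf0n k) then show ?case using nf_T nf_mneg by (metis mmul_mneg_right)
next
  case (nfG i' y g)
  then obtain k where "nf G l k (mmul x y)" by blast
  then show ?case using nf_G[of G l k "mmul x y" g] nfG by (metis mmul_assoc)
next
  case (nfT x' m)
  then obtain k where "nf G l k (mmul x x')" by blast
  then show ?case using nf_T[of G l k "mmul x x'" m] by (metis mmul_assoc)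
qed

lemma nf_inv: "nf G l i x \<Longrightarrow> fuchsian_group G \<Longrightarrow> \<exists>k. nf G l k (minv x)"
proof (induction rule: nf.induct)
  case (nf0 k) then show ?case using nf.nf0[of G l "-k"] by (auto simp: minv_translation)
next
  case (nf0n k) then show ?case using nf.nf0n[of G l "-k"] by (auto simp: minv_translation minv_mneg)
next
  case (nfG i y g)
  have t0: "nf G l 0 mid" using nf.nf0[of G l 0] by (simp add: translation_0)
  have "nf G l 1 (mmul mid (minv g))"
    using nf.nfG[OF t0 _ fg_minv[OF nfG.prems nfG.hyps(3)]] nfG.hyps(4) by (simp add: is_id_psl_minv)
  then show ?case using nfG nf_mul by (metis minv_mmul mmul_mid_left)
next
  case (nfT x k)
  then show ?case using nf.nf0[of G l "-k"] nf_mul by (metis minv_mmul minv_translation mult_minus_left of_int_minus)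
qed

lemma gen_group_nf:
  assumes fg: "fuchsian_group G" and S: "\<forall>s\<in>S. s \<in> G \<and> \<not> is_id_psl s \<or> s = translation l"
  shows "x \<in> gen_group S \<Longrightarrow> \<exists>i. nf G l i x"
proof (induction rule: gen_group.induct)
  case gen_id then show ?case using nf.nf0[of G l 0] by (auto simp: translation_0)
next
  case (gen_base s)
  have t0: "nf G l 0 mid" using nf.nf0[of G l 0] by (simp add: translation_0)
  show ?case using S gen_base nf.nfG[OF t0, of s] nf.nf0[of G l 1] by auto
next
  case (gen_mul x y) then show ?case using nf_mul fg by blast
next
  case (gen_inv x) then show ?case using nf_inv fg by blast
qed



lemma nf0_cases: "nf G l 0 y \<Longrightarrow> \<exists>t. y = translation t \<or> y = mneg (translation t)"
  by (cases rule: nf.cases) auto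

lemma nf_le2: "nf G l i y \<Longrightarrow> i \<le> 2"
  by (induction rule: nf.induct) auto

lemma nf_dyn:
  assumes fg: "fuchsian_group G" and KU: "K \<subseteq> uhp"
    and H2: "\<forall>g\<in>G. \<not> is_id_psl g \<longrightarrow> (\<forall>z\<in>K. cmod (jf g z) > 1)"
    and H3: "\<forall>g\<in>G. \<not> is_id_psl g \<longrightarrow> (\<forall>z\<in>closure K \<inter> uhp. cmod (jf g z) \<ge> 1)"
    and H4: "\<forall>z\<in>uhp. Re z < \<alpha> \<or> Re z > \<beta> \<longrightarrow> z \<in> K"
    and H5: "\<forall>g\<in>G. \<not> is_id_psl g \<longrightarrow> (\<forall>z\<in>closure K \<inter> uhp. \<alpha> \<le> Re (mob g z) \<and> Re (mob g z) \<le> \<beta>)"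
    and a: "\<alpha>' < \<alpha>" and b: "\<beta> < \<beta>'" and l: "l = \<beta>' - \<alpha>'" and lpos: "0 < l"
  shows "nf G l i w \<Longrightarrow> w \<in> SL2 \<and>
    (i = 1 \<longrightarrow> (\<forall>z\<in>K. cmod (jf w z) > 1) \<and> (\<forall>z\<in>closure K \<inter> uhp. cmod (jf w z) \<ge> 1 \<and>
        (cmod (jf w z) > 1 \<or> (\<exists>g\<in>G. \<not> is_id_psl g \<and> mc g = mc w \<and> md g = md w)))) \<and>
    (i = 2 \<longrightarrow> (\<forall>z\<in>uhp. \<alpha>' \<le> Re z \<and> Re z \<le> \<beta>' \<longrightarrow> cmod (jf w z) > 1))"
proof (induction rule: nf.induct)
  case (nf0 k) then show ?case by (simp add: SL2_translation)
next
  case (nf0n k) then show ?case by (simp add: SL2_translation SL2_mneg)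
next
  case (nfG i y g)
  have gS: "g \<in> SL2" using fg nfG.hyps(3) by (rule fg_SL2)
  have yS: "y \<in> SL2" using nfG.IH by blast
  have wS: "mmul y g \<in> SL2" using gS yS by (simp add: SL2_mmul)
  have jm: "jf (mmul y g) z = jf y (mob g z) * jf g z" if "z \<in> uhp" for z
    using jf_mmul[OF yS gS] that by (simp add: uhp_def)
  have mobu: "mob g z \<in> uhp" if "z \<in> uhp" for z using mob_uhp[OF gS that] .
  show ?case
  proof (cases "i = 0")
    case True
    then obtain t where yt: "y = translation t \<or> y = mneg (translation t)"
      using nf0_cases nfG.hyps(1) by blast
    have j1: "cmod (jf y u) = 1" for u using yt by (auto simp: jf_mneg)
    have same: "\<exists>g'\<in>G. \<not> is_id_psl g' \<and> mc g' = mc (mmul y g) \<and> md g' = md (mmul y g)"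
    proof (cases "y = translation t")
      case True then show ?thesis using nfG.hyps(3,4) by (auto simp: mcd_trans_mul)
    next
      case False
      then have "y = mneg (translation t)" using yt by blast
      then show ?thesis using nfG.hyps(3,4) fg_mneg[OF fg nfG.hyps(3)]
        by (intro bexI[of _ "mneg g"]) (auto simp: mcd_trans_mul mmul_mneg_left is_id_psl_mneg)
    qed
    have "\<forall>z\<in>K. cmod (jf (mmul y g) z) > 1"
      using H2 nfG.hyps(3,4) KU jm j1 by (auto simp: norm_mult)
    moreover have "\<forall>z\<in>closure K \<inter> uhp. cmod (jf (mmul y g) z) \<ge> 1"
      using H3 nfG.hyps(3,4) jm j1 by (auto simp: norm_mult)
    ultimately show ?thesis using wS same by auto
  next
    case False
    then have i2: "i = 2" using nfG.hyps(1,2) nf_le2[OF nfG.hyps(1)] by linarith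
    have big: "cmod (jf (mmul y g) z) > 1" if z: "z \<in> closure K \<inter> uhp" for z
    proof -
      have "\<alpha> \<le> Re (mob g z) \<and> Re (mob g z) \<le> \<beta>" using H5 nfG.hyps(3,4) z by blast
      then have "cmod (jf y (mob g z)) > 1" using nfG.IH i2 mobu z a b by auto
      moreover have "cmod (jf g z) \<ge> 1" using H3 nfG.hyps(3,4) z by blast
      ultimately have "cmod (jf y (mob g z)) * cmod (jf g z) > 1"
        by (metis less_1_mult less_le_trans order.not_eq_order_implies_strict mult.right_neutral)
      then show ?thesis using jm z by (simp add: norm_mult)
    qed
    have "K \<subseteq> closure K \<inter> uhp" using KU closure_subset by blast
    then show ?thesis using wS big by (auto simp: less_imp_le)
  qed
next
  case (nfT x k)
  have xS: "x \<in> SL2" using nfT.IH by blast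
  let ?t = "translation (of_int k * l)"
  have wS: "mmul x ?t \<in> SL2" using xS SL2_translation by (simp add: SL2_mmul)
  have "cmod (jf (mmul x ?t) z) > 1" if z: "z \<in> uhp" "\<alpha>' \<le> Re z" "Re z \<le> \<beta>'" for z
  proof -
    have mu: "mob ?t z \<in> uhp" using mob_uhp[OF SL2_translation z(1)] .
    have re: "Re (mob ?t z) = Re z + of_int k * l" by (simp add: Re_mob_translation)
    have "Re (mob ?t z) < \<alpha> \<or> Re (mob ?t z) > \<beta>"
    proof (cases "k > 0")
      case True
      then have "of_int k * l \<ge> l" using lpos by (simp add: mult_le_cancel_right1)
      then show ?thesis using re z a b l by auto
    next
      case False
      then have "k \<le> -1" using nfT.hyps(2) by auto
      then have "of_int k \<le> (-1::real)" by linarith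
      then have "of_int k * l \<le> - 1 * l" using lpos by (intro mult_right_mono) auto
      then show ?thesis using re z a b l by auto
    qed
    then have "mob ?t z \<in> K" using H4 mu by blast
    then have "cmod (jf x (mob ?t z)) > 1" using nfT.IH by blast
    moreover have "jf (mmul x ?t) z = jf x (mob ?t z)"
      using jf_mmul[OF xS SL2_translation, of z] z by (simp add: uhp_def)
    ultimately show ?thesis by simp
  qed
  then show ?case using wS by auto
qed



lemma Kset_mem: "z \<in> Kset G \<longleftrightarrow> z \<in> uhp \<and> (\<forall>g\<in>G. \<not> is_id_psl g \<longrightarrow> mc g \<noteq> 0 \<longrightarrow> 1 < cmod (jf g z))"
  unfolding Kset_def isom_ext_def jf_def by blast

lemma Kset_uhp: "Kset G \<subseteq> uhp" unfolding Kset_def by blast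

lemma orbit_bound:
  assumes "ordinary_set_nbhd_infty G"
  obtains M where "M \<ge> 1" "\<forall>g\<in>G. cmod (mob g \<i>) \<le> M"
proof -
  have "bounded (orbit G \<i>)" using assms unfolding ordinary_set_nbhd_infty_def infty_in_limit_set_def by blast
  then obtain M where "\<forall>x\<in>orbit G \<i>. norm x \<le> M" unfolding bounded_iff by blast
  then have "\<forall>g\<in>G. cmod (mob g \<i>) \<le> max M 1" unfolding orbit_def by fastforce
  then show ?thesis using that[of "max M 1"] by simp
qed

lemma c_nonzero:
  assumes fg: "fuchsian_group G" and np: "\<forall>g\<in>G. \<not> parabolic_elt g"
    and Mb: "\<forall>g\<in>G. cmod (mob g \<i>) \<le> M"
    and g: "g \<in> G" "\<not> is_id_psl g"
  shows "mc g \<noteq> 0"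
proof
  assume c0: "mc g = 0"
  obtain a b c d where gd: "g = (a,b,c,d)" by (cases g)
  have c: "c = 0" using c0 by (simp add: gd mc_def)
  have det: "a * d = 1" using fg_SL2[OF fg g(1)] by (simp add: gd SL2_def c)
  have "\<bar>a + d\<bar> \<noteq> 2"
  proof
    assume t: "\<bar>a + d\<bar> = 2"
    have "(a - d)^2 = (a + d)^2 - 4 * (a * d)" by (simp add: power2_eq_square algebra_simps)
    also have "(a + d)^2 = \<bar>a + d\<bar>^2" by simp
    also have "\<bar>a + d\<bar>^2 - 4 * (a * d) = 0" using t det by simp
    finally have ad: "a = d" by simp
    then have "a * a = 1" using det by simp
    then have "a = 1 \<or> a = -1" by (simp add: square_eq_1_iff)
    then have "\<bar>mtrace g\<bar> = 2" using ad by (auto simp: mtrace_def gd)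
    then show False using np g unfolding parabolic_elt_def by blast
  qed
  have "\<bar>a\<bar> \<noteq> 1"
  proof
    assume "\<bar>a\<bar> = 1"
    then have "a = 1 \<and> d = 1 \<or> a = -1 \<and> d = -1" using det by (auto simp: abs_if split: if_splits)
    then show False using \<open>\<bar>a + d\<bar> \<noteq> 2\<close> by auto
  qed
  obtain p q r where h: "(p,q,0,r) \<in> G" "p * r = 1" "\<bar>p\<bar> > 1"
  proof (cases "\<bar>a\<bar> > 1")
    case True then show ?thesis using that[of a b d] g det by (simp add: gd c)
  next
    case False
    then have "\<bar>a\<bar> < 1" using \<open>\<bar>a\<bar> \<noteq> 1\<close> by simp
    moreover have "\<bar>a\<bar> * \<bar>d\<bar> = 1" using det by (simp add: abs_mult[symmetric])
    ultimately have "\<bar>d\<bar> > 1"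
    proof -
      assume a1: "\<bar>a\<bar> < 1" and a2: "\<bar>a\<bar> * \<bar>d\<bar> = 1"
      show ?thesis
      proof (rule ccontr)
        assume "\<not> \<bar>d\<bar> > 1"
        then have "\<bar>a\<bar> * \<bar>d\<bar> \<le> \<bar>a\<bar>" by (intro mult_left_le) auto
        with a1 a2 show False by simp
      qed
    qed
    moreover have "minv g = (d, -b, 0, a)" by (simp add: minv_def gd c)
    ultimately show ?thesis using that[of d "-b" a] fg_minv[OF fg g(1)] det by (simp add: mult.commute)
  qed
  define hp where "hp n = ((mmul (p,q,0,r)) ^^ n) mid" for n
  have hpG: "hp n \<in> G" for n
    by (induction n) (auto simp: hp_def fg_mmul[OF fg h(1)] intro: fg_mmul[OF fg h(1)] fg[unfolded fuchsian_group_def, THEN conjunct2, THEN conjunct1])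
  have hpf: "\<exists>s. hp n = (p^n, s, 0, r^n)" for n
  proof (induction n)
    case 0 then show ?case by (simp add: hp_def mid_def)
  next
    case (Suc n)
    then obtain s where "hp n = (p^n, s, 0, r^n)" by blast
    then show ?case by (simp add: hp_def mmul_def)
  qed
  have rp: "r = 1 / p" using h(2) h(3) by (simp add: field_simps)
  have "Im (mob (hp n) \<i>) = (p*p)^n" for n
  proof -
    obtain s where hs: "hp n = (p^n, s, 0, r^n)" using hpf by blast
    have "Im (mob (hp n) \<i>) = p^n / r^n" by (simp add: hs mob_def Im_divide power2_eq_square)
    also have "\<dots> = (p*p)^n" by (simp add: rp power_one_over power_mult_distrib)
    finally show ?thesis .
  qed
  then have bnd: "(p*p)^n \<le> M" for n using Mb hpG abs_Im_le_cmod[of "mob (hp n) \<i>"] by (metis abs_ge_self order_trans)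
  have "p * p > 1" using h(3) less_1_mult[of "\<bar>p\<bar>" "\<bar>p\<bar>"] by (simp add: abs_mult_self_eq)
  then obtain n where "M < (p*p)^n" using real_arch_pow by blast
  with bnd[of n] show False by simp
qed



lemma key_bound0:
  fixes X Y N :: real
  assumes N: "N \<ge> 1" and X: "X \<ge> 0" and Y: "Y \<ge> 0" and h1: "X \<le> N * (1 + Y)"
    and h2: "X * Y \<le> 2 + 2 * N * (1 + X)"
  shows "X \<le> 7 * (N * N)"
proof (rule ccontr)
  assume "\<not> X \<le> 7 * (N * N)"
  then have Xb: "X > 7 * (N * N)" by simp
  have f1: "X * (N * Y) \<ge> X * (X - N)" using h1 X by (intro mult_left_mono) (auto simp: algebra_simps)
  have f2: "N * (X * Y) \<le> N * (2 + 2 * N * (1 + X))" using h2 N by (intro mult_left_mono) auto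
  have f3: "X * X \<ge> (7 * (N * N)) * X" using Xb X by (intro mult_right_mono) auto
  have f4: "N * X \<le> (N * N) * X" using N X by (intro mult_right_mono) auto
  have f5: "N \<le> N * N" using N by simp
  have f6: "(N * N) * X > (N * N) * (7 * (N * N))" using Xb N by (intro mult_strict_left_mono) auto
  have f7: "(N * N) * (N * N) \<ge> N * N" using N mult_mono[of 1 N 1 N] mult_left_mono[of 1 "N*N" "N*N"] by simp
  have e1: "X * (N * Y) = N * (X * Y)" by simp
  have e2: "N * (2 + 2 * N * (1 + X)) = 2 * N + 2 * (N * N) + 2 * ((N * N) * X)" by (simp add: algebra_simps)
  have e3: "X * (X - N) = X * X - N * X" by (simp add: algebra_simps)
  have e4: "(N * N) * (7 * (N * N)) = 7 * ((N * N) * (N * N))" by simp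
  have e5: "(7 * (N * N)) * X = 7 * ((N * N) * X)" by simp
  have lin: "\<And>a b c d e f n::real. a - b \<le> f \<Longrightarrow> f \<le> 2*n + 2*d + 2*c \<Longrightarrow> 7*c \<le> a \<Longrightarrow> b \<le> c
     \<Longrightarrow> n \<le> d \<Longrightarrow> 7*e < c \<Longrightarrow> d \<le> e \<Longrightarrow> 1 \<le> n \<Longrightarrow> False" by linarith
  have g1: "X*X - N*X \<le> N*(X*Y)" using f1 e1 e3 by simp
  have g2: "N*(X*Y) \<le> 2*N + 2*(N*N) + 2*((N*N)*X)" using f2 e2 by simp
  have g3: "7*((N*N)*X) \<le> X*X" using f3 e5 by simp
  have g6: "7*((N*N)*(N*N)) < (N*N)*X" using f6 e4 by simp
  show False using lin[OF g1 g2 g3 f4 f5 g6 f7 N] .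
qed

lemma key_bound:
  fixes X Y M :: real
  assumes M: "M \<ge> 1" and X: "X \<ge> 0" and Y: "Y \<ge> 0" and h1: "X \<le> M^2 * (1 + Y)"
    and h2: "X * Y \<le> 2 + 2 * M^2 * (1 + X)"
  shows "X \<le> 7 * M^4"
proof -
  have "M^2 \<ge> 1" using M by (simp add: one_le_power)
  then have "X \<le> 7 * (M^2 * M^2)" using key_bound0[OF _ X Y h1 h2] by blast
  then show ?thesis by (simp add: power2_eq_square power4_eq_xxxx mult.assoc)
qed

lemma cmod_ib: "(cmod (of_real a * \<i> + of_real b))^2 = a^2 + b^2"
  by (simp add: cmod_power2)

lemma orbit_ineq:
  assumes g: "(a,b,c,d) \<in> SL2" and Mb: "cmod (mob (a,b,c,d) \<i>) \<le> M"
  shows "a^2 + b^2 \<le> M^2 * (c^2 + d^2)"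
proof -
  have nz: "of_real c * \<i> + of_real d \<noteq> 0"
    using jf_nonzero[OF g, of \<i>] by (simp add: jf_def mc_def md_def)
  have "mob (a,b,c,d) \<i> = (of_real a * \<i> + of_real b) / (of_real c * \<i> + of_real d)"
    by (simp add: mob_def)
  then have "cmod (of_real a * \<i> + of_real b) \<le> M * cmod (of_real c * \<i> + of_real d)"
    using Mb nz by (simp add: norm_divide divide_le_eq)
  then have "(cmod (of_real a * \<i> + of_real b))^2 \<le> (M * cmod (of_real c * \<i> + of_real d))^2"
    by (intro power_mono) auto
  then show ?thesis by (simp add: power_mult_distrib cmod_ib)
qed

lemma entries_bound:
  assumes fg: "fuchsian_group G" and M: "M \<ge> 1" and Mb: "\<forall>g\<in>G. cmod (mob g \<i>) \<le> M"
    and g: "(a,b,c,d) \<in> G" and c: "\<bar>c\<bar> \<le> 1"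
  shows "a^2 \<le> 7 * M^4 \<and> d^2 \<le> 7 * M^4 \<and> b^2 \<le> M^2 * (1 + 7 * M^4)"
proof -
  have S: "(a,b,c,d) \<in> SL2" using fg_SL2[OF fg g] .
  have det: "a * d - b * c = 1" using S by (simp add: SL2_def)
  have E1: "a^2 + b^2 \<le> M^2 * (c^2 + d^2)" using orbit_ineq[OF S] Mb g by blast
  have gi: "(d, -b, -c, a) \<in> G" using fg_minv[OF fg g] by (simp add: minv_def)
  have E2: "d^2 + b^2 \<le> M^2 * (c^2 + a^2)" using orbit_ineq[OF fg_SL2[OF fg gi]] Mb gi by simp
  have c2: "c^2 \<le> 1" using c by (metis abs_le_square_iff abs_one one_power2)
  have M2: "M^2 \<ge> 0" by simp
  have Mc: "M^2 * (c^2 + t) \<le> M^2 * (1 + t)" for t using c2 M2 by (intro mult_left_mono) auto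
  have ad2: "(a*d)^2 \<le> 2 + 2 * b^2"
  proof -
    have "a * d = 1 + b * c" using det by simp
    then have "(a*d)^2 = (1 + b*c)^2" by simp
    also have "\<dots> \<le> 2 + 2 * (b*c)^2"
    proof -
      have "0 \<le> (1 - b*c)^2" by simp
      then show ?thesis by (simp add: power2_eq_square algebra_simps)
    qed
    also have "(b*c)^2 \<le> b^2" using c2 by (simp add: power_mult_distrib mult_left_le)
    finally show ?thesis by simp
  qed
  have main: "max (a^2) (d^2) \<le> 7 * M^4"
  proof (cases "a^2 \<le> d^2")
    case True
    have h1: "d^2 \<le> M^2 * (1 + a^2)"
      using E2 Mc[of "a^2"] by (simp add: add.commute) (smt (verit) zero_le_power2)
    have "b^2 \<le> M^2 * (1 + d^2)"
      using E1 Mc[of "d^2"] by (smt (verit) zero_le_power2)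
    then have h2: "d^2 * a^2 \<le> 2 + 2 * M^2 * (1 + d^2)" using ad2 by (simp add: power_mult_distrib algebra_simps)
    have "d^2 \<le> 7 * M^4" by (rule key_bound[OF M _ _ h1 h2]) auto
    then show ?thesis using True by simp
  next
    case False
    have h1: "a^2 \<le> M^2 * (1 + d^2)"
      using E1 Mc[of "d^2"] by (smt (verit) zero_le_power2)
    have "M^2 * (1 + d^2) \<le> M^2 * (1 + a^2)" using False M2 by (intro mult_left_mono) auto
    then have "b^2 \<le> M^2 * (1 + a^2)"
      using E1 Mc[of "d^2"] by (smt (verit) zero_le_power2)
    then have h2: "a^2 * d^2 \<le> 2 + 2 * M^2 * (1 + a^2)" using ad2 by (simp add: power_mult_distrib algebra_simps)
    have "a^2 \<le> 7 * M^4" by (rule key_bound[OF M _ _ h1 h2]) auto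
    then show ?thesis using False by simp
  qed
  moreover have "b^2 \<le> M^2 * (1 + 7 * M^4)"
  proof -
    have "d^2 \<le> 7 * M^4" using main by simp
    then have "c^2 + d^2 \<le> 1 + 7 * M^4" using c2 by simp
    then have "M^2 * (c^2 + d^2) \<le> M^2 * (1 + 7 * M^4)" using M2 by (intro mult_left_mono) auto
    then show ?thesis using E1 by (smt (verit) zero_le_power2)
  qed
  ultimately show ?thesis by simp
qed



definition ent_bound :: "real \<Rightarrow> mat2 \<Rightarrow> bool" where
  "ent_bound B = (\<lambda>(a,b,c,d). \<bar>a\<bar> \<le> B \<and> \<bar>b\<bar> \<le> B \<and> \<bar>c\<bar> \<le> B \<and> \<bar>d\<bar> \<le> B)"

lemma dist4_le: fixes a b c d a' b' c' d' :: real shows "dist (a,b,c,d) (a',b',c',d') \<le> \<bar>a-a'\<bar> + \<bar>b-b'\<bar> + \<bar>c-c'\<bar> + \<bar>d-d'\<bar>"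
proof -
  have "dist (c,d) (c',d') \<le> \<bar>c-c'\<bar> + \<bar>d-d'\<bar>"
    using sqrt_sum_squares_le_sum_abs[of "dist c c'" "dist d d'"] by (simp add: dist_Pair_Pair dist_real_def)
  moreover have "dist (b,c,d) (b',c',d') \<le> \<bar>b-b'\<bar> + dist (c,d) (c',d')"
    using sqrt_sum_squares_le_sum_abs[of "dist b b'" "dist (c,d) (c',d')"] by (simp add: dist_Pair_Pair[of b] dist_real_def)
  moreover have "dist (a,b,c,d) (a',b',c',d') \<le> \<bar>a-a'\<bar> + dist (b,c,d) (b',c',d')"
    using sqrt_sum_squares_le_sum_abs[of "dist a a'" "dist (b,c,d) (b',c',d')"] by (simp add: dist_Pair_Pair[of a] dist_real_def)
  ultimately show ?thesis by linarith
qed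

lemma dist4_ge: fixes a b c d a' b' c' d' :: real shows
  "\<bar>a-a'\<bar> \<le> dist (a,b,c,d) (a',b',c',d')"
  "\<bar>b-b'\<bar> \<le> dist (a,b,c,d) (a',b',c',d')"
  "\<bar>c-c'\<bar> \<le> dist (a,b,c,d) (a',b',c',d')"
  "\<bar>d-d'\<bar> \<le> dist (a,b,c,d) (a',b',c',d')"
proof -
  let ?p = "(a,b,c,d)" and ?q = "(a',b',c',d')"
  have s1: "dist (snd ?p) (snd ?q) \<le> dist ?p ?q" by (rule dist_snd_le)
  have s2: "dist (snd (snd ?p)) (snd (snd ?q)) \<le> dist (snd ?p) (snd ?q)" by (rule dist_snd_le)
  have f1: "dist (fst ?p) (fst ?q) \<le> dist ?p ?q" by (rule dist_fst_le)
  have f2: "dist (fst (snd ?p)) (fst (snd ?q)) \<le> dist (snd ?p) (snd ?q)" by (rule dist_fst_le)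
  have f3: "dist (fst (snd (snd ?p))) (fst (snd (snd ?q))) \<le> dist (snd (snd ?p)) (snd (snd ?q))" by (rule dist_fst_le)
  have f4: "dist (snd (snd (snd ?p))) (snd (snd (snd ?q))) \<le> dist (snd (snd ?p)) (snd (snd ?q))" by (rule dist_snd_le)
  show "\<bar>a-a'\<bar> \<le> dist ?p ?q" using f1 by (simp add: dist_real_def)
  show "\<bar>b-b'\<bar> \<le> dist ?p ?q" using f2 s1 by (simp add: dist_real_def)
  show "\<bar>c-c'\<bar> \<le> dist ?p ?q" using f3 s2 s1 by (simp add: dist_real_def)
  show "\<bar>d-d'\<bar> \<le> dist ?p ?q" using f4 s2 s1 by (simp add: dist_real_def)
qed

lemma abs_mul_le: "\<bar>x::real\<bar> \<le> B \<Longrightarrow> \<bar>x * y\<bar> \<le> B * \<bar>y\<bar>"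
  using mult_right_mono[of "\<bar>x\<bar>" B "\<bar>y\<bar>"] by (simp add: abs_mult)

lemma abs_mul_le2: "\<bar>x::real\<bar> \<le> B \<Longrightarrow> \<bar>y\<bar> \<le> D \<Longrightarrow> 0 \<le> B \<Longrightarrow> \<bar>x * y\<bar> \<le> B * D"
  using abs_mul_le[of x B y] mult_left_mono[of "\<bar>y\<bar>" D B] by linarith

lemma finite_bounded_G:
  assumes fg: "fuchsian_group G" and B: "B > 0"
  shows "finite {g\<in>G. ent_bound B g}"
proof -
  let ?F = "{g\<in>G. ent_bound B g}"
  obtain e0 where e0: "e0 > 0" "\<forall>h\<in>G. dist h mid < e0 \<longrightarrow> h = mid"
    using fg unfolding fuchsian_group_def by blast
  define e where "e = e0 / (8 * B + 1)"
  have epos: "e > 0" using e0 B by (simp add: e_def)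
  have sep: "g = h" if g: "g \<in> ?F" and h: "h \<in> ?F" and dgh: "dist g h < e" for g h
  proof -
    obtain a b c d where gd: "g = (a,b,c,d)" by (cases g)
    obtain a' b' c' d' where hd: "h = (a',b',c',d')" by (cases h)
    have gG: "g \<in> G" and hG: "h \<in> G" using g h by auto
    have bnd: "\<bar>a\<bar> \<le> B" "\<bar>b\<bar> \<le> B" "\<bar>c\<bar> \<le> B" "\<bar>d\<bar> \<le> B"
      using g by (auto simp: gd ent_bound_def)
    have det: "a * d - b * c = 1" using fg_SL2[OF fg gG] by (simp add: gd SL2_def)
    define D where "D = dist g h"
    have dd: "\<bar>a'-a\<bar> \<le> D" "\<bar>b'-b\<bar> \<le> D" "\<bar>c'-c\<bar> \<le> D" "\<bar>d'-d\<bar> \<le> D"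
      using dist4_ge[where a=a and b=b and c=c and d=d and a'=a' and b'=b' and c'=c' and d'=d'] by (simp_all add: D_def gd hd abs_minus_commute)
    let ?u = "mmul (minv g) h"
    have uG: "?u \<in> G" using fg_mmul[OF fg fg_minv[OF fg gG] hG] .
    have ueq: "?u = (d*a' - b*c', d*b' - b*d', a*c' - c*a', a*d' - c*b')"
      by (simp add: gd hd minv_def mmul_def algebra_simps)
    have r1: "d*a' - b*c' - 1 = d*(a'-a) - b*(c'-c)" using det by (simp add: algebra_simps)
    have r2: "d*b' - b*d' - 0 = d*(b'-b) - b*(d'-d)" by (simp add: algebra_simps)
    have r3: "a*c' - c*a' - 0 = a*(c'-c) - c*(a'-a)" using det by (simp add: algebra_simps)
    have r4: "a*d' - c*b' - 1 = a*(d'-d) - c*(b'-b)" using det by (simp add: algebra_simps)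
    have tri: "\<And>x y::real. \<bar>x - y\<bar> \<le> \<bar>x\<bar> + \<bar>y\<bar>" by linarith
    have m1: "\<bar>d*(a'-a)\<bar> \<le> B * D" "\<bar>b*(c'-c)\<bar> \<le> B * D" "\<bar>d*(b'-b)\<bar> \<le> B * D" "\<bar>b*(d'-d)\<bar> \<le> B * D"
         "\<bar>a*(c'-c)\<bar> \<le> B * D" "\<bar>c*(a'-a)\<bar> \<le> B * D" "\<bar>a*(d'-d)\<bar> \<le> B * D" "\<bar>c*(b'-b)\<bar> \<le> B * D"
      using abs_mul_le2 bnd dd B by (meson less_imp_le)+
    have "dist ?u mid \<le> \<bar>d*a' - b*c' - 1\<bar> + \<bar>d*b' - b*d' - 0\<bar> + \<bar>a*c' - c*a' - 0\<bar> + \<bar>a*d' - c*b' - 1\<bar>"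
      using dist4_le[of "d*a' - b*c'" "d*b' - b*d'" "a*c' - c*a'" "a*d' - c*b'" 1 0 0 1] by (simp add: ueq mid_def)
    also have "\<dots> \<le> 8 * (B * D)"
      unfolding r1 r2 r3 r4 using tri[of "d*(a'-a)" "b*(c'-c)"] tri[of "d*(b'-b)" "b*(d'-d)"]
        tri[of "a*(c'-c)" "c*(a'-a)"] tri[of "a*(d'-d)" "c*(b'-b)"] m1 by linarith
    also have "8 * (B * D) < e0"
    proof -
      have "B * D \<le> B * e" using dgh B by (simp add: D_def)
      moreover have "8 * (B * e) < e0" using e0 B by (simp add: e_def field_simps)
      ultimately show ?thesis by linarith
    qed
    finally have "?u = mid" using e0 uG by blast
    then have "mmul g ?u = g" by simp
    moreover have "mmul g ?u = h"
      using mmul_minv_SL2'[OF fg_SL2[OF fg gG]] by (simp add: mmul_assoc[symmetric])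
    ultimately show ?thesis by simp
  qed
  have ud: "uniform_discrete ?F" unfolding uniform_discrete_def using epos sep by blast
  have "?F \<subseteq> cball 0 (4 * B)"
  proof
    fix g assume g: "g \<in> ?F"
    obtain a b c d where gd: "g = (a,b,c,d)" by (cases g)
    have "\<bar>a\<bar> \<le> B" "\<bar>b\<bar> \<le> B" "\<bar>c\<bar> \<le> B" "\<bar>d\<bar> \<le> B" using g by (auto simp: gd ent_bound_def)
    moreover have "dist 0 g \<le> \<bar>0-a\<bar> + \<bar>0-b\<bar> + \<bar>0-c\<bar> + \<bar>0-d\<bar>"
      using dist4_le[of 0 0 0 0 a b c d] by (simp add: gd zero_prod_def)
    ultimately show "g \<in> cball 0 (4 * B)" by simp
  qed
  then have "bounded ?F" using bounded_cball bounded_subset by blast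
  then show ?thesis using ud uniform_discrete_finite_iff by blast
qed

lemma abs_le_1_sq: "\<bar>x::real\<bar> \<le> 1 + x^2"
proof (cases "\<bar>x\<bar> \<le> 1")
  case True then show ?thesis by (simp add: add_increasing2)
next
  case False
  have "1 * \<bar>x\<bar> \<le> \<bar>x\<bar> * \<bar>x\<bar>" by (rule mult_right_mono) (use False in auto)
  then have "\<bar>x\<bar> \<le> \<bar>x\<bar> * \<bar>x\<bar>" by simp
  moreover have "\<bar>x\<bar> * \<bar>x\<bar> = x^2" by (simp add: power2_eq_square abs_mult_self_eq)
  ultimately show ?thesis by linarith
qed



lemma c_lower:
  assumes fg: "fuchsian_group G" and np: "\<forall>g\<in>G. \<not> parabolic_elt g"
    and ord: "ordinary_set_nbhd_infty G"
  shows "\<exists>\<delta>>0. \<forall>g\<in>G. \<not> is_id_psl g \<longrightarrow> \<delta> \<le> \<bar>mc g\<bar>"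
proof -
  obtain M where M: "M \<ge> 1" and Mb: "\<forall>g\<in>G. cmod (mob g \<i>) \<le> M" using orbit_bound[OF ord] by blast
  define B where "B = 1 + 7 * M^4 + M^2 * (1 + 7 * M^4) + 1"
  have Bpos: "B > 0" unfolding B_def by (simp add: add_pos_nonneg)
  define F where "F = {g\<in>G. ent_bound B g}"
  have finF: "finite F" unfolding F_def using finite_bounded_G[OF fg Bpos] .
  define C where "C = (\<lambda>g. \<bar>mc g\<bar>) ` {g\<in>F. mc g \<noteq> 0}"
  have finC: "finite C" unfolding C_def using finF by simp
  define \<delta> where "\<delta> = Min (insert 1 C)"
  have dpos: "\<delta> > 0" unfolding \<delta>_def using finC by (auto simp: C_def)
  have "\<delta> \<le> \<bar>mc g\<bar>" if g: "g \<in> G" "\<not> is_id_psl g" for g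
  proof -
    have c0: "mc g \<noteq> 0" using c_nonzero[OF fg np Mb g] .
    show ?thesis
    proof (cases "\<bar>mc g\<bar> \<le> 1")
      case True
      obtain a b c d where gd: "g = (a,b,c,d)" by (cases g)
      have cc: "\<bar>c\<bar> \<le> 1" using True by (simp add: gd mc_def)
      have eb: "a^2 \<le> 7 * M^4 \<and> d^2 \<le> 7 * M^4 \<and> b^2 \<le> M^2 * (1 + 7 * M^4)"
        using entries_bound[OF fg M Mb g(1)[unfolded gd] cc] .
      have M2: "0 \<le> M^2 * (1 + 7 * M^4)" by simp
      have M4: "0 \<le> 7 * M^4" by simp
      have "\<bar>a\<bar> \<le> B" using abs_le_1_sq[of a] eb M2 unfolding B_def by linarith
      moreover have "\<bar>b\<bar> \<le> B" using abs_le_1_sq[of b] eb M4 unfolding B_def by linarith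
      moreover have "\<bar>d\<bar> \<le> B" using abs_le_1_sq[of d] eb M2 unfolding B_def by linarith
      moreover have "\<bar>c\<bar> \<le> B" using cc M2 M4 unfolding B_def by linarith
      ultimately have "g \<in> F" using g by (simp add: F_def gd ent_bound_def)
      then have "\<bar>mc g\<bar> \<in> C" using c0 by (auto simp: C_def)
      then show ?thesis unfolding \<delta>_def using finC by simp
    next
      case False
      have "\<delta> \<le> 1" unfolding \<delta>_def using finC by simp
      then show ?thesis using False by simp
    qed
  qed
  then show ?thesis using dpos by blast
qed

lemma K_outside:
  assumes fg: "fuchsian_group G" and np: "\<forall>g\<in>G. \<not> parabolic_elt g"
    and ord: "ordinary_set_nbhd_infty G"
    and ha: "\<forall>z\<in>bdryH (Kset G). \<alpha> \<le> Re z" and hb: "\<forall>z\<in>bdryH (Kset G). Re z \<le> \<beta>"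
    and z: "z \<in> uhp" and out: "Re z < \<alpha> \<or> Re z > \<beta>"
  shows "z \<in> Kset G"
proof (rule ccontr)
  assume zK: "z \<notin> Kset G"
  obtain \<delta> where dpos: "\<delta> > 0" and dl: "\<forall>g\<in>G. \<not> is_id_psl g \<longrightarrow> \<delta> \<le> \<bar>mc g\<bar>"
    using c_lower[OF fg np ord] by blast
  define Y where "Y = 1 / \<delta> + 1"
  have Ypos: "Y > 0" using dpos by (simp add: Y_def add_pos_pos)
  define p where "p = Complex (Re z) Y"
  have pK: "p \<in> Kset G"
    unfolding Kset_mem
  proof (intro conjI ballI impI)
    show "p \<in> uhp" using Ypos by (simp add: p_def uhp_def)
    fix g assume g: "g \<in> G" "\<not> is_id_psl g" "mc g \<noteq> 0"
    have "\<delta> \<le> \<bar>mc g\<bar>" using dl g by blast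
    then have "\<delta> * Y \<le> \<bar>mc g\<bar> * Y" using Ypos by (intro mult_right_mono) auto
    moreover have "\<delta> * Y = 1 + \<delta>" using dpos by (simp add: Y_def field_simps)
    moreover have "\<bar>Im (jf g p)\<bar> = \<bar>mc g\<bar> * Y" using Ypos by (simp add: jf_def p_def abs_mult)
    moreover have "\<bar>Im (jf g p)\<bar> \<le> cmod (jf g p)" by (rule abs_Im_le_cmod)
    ultimately show "1 < cmod (jf g p)" using dpos by linarith
  qed
  have zu: "Im z > 0" using z by (simp add: uhp_def)
  have "closed_segment z p \<inter> Kset G \<noteq> {}" using pK by auto
  moreover have "closed_segment z p - Kset G \<noteq> {}" using zK by auto
  ultimately have "closed_segment z p \<inter> frontier (Kset G) \<noteq> {}"
    by (intro connected_Int_frontier) auto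
  then obtain q where q: "q \<in> closed_segment z p" "q \<in> frontier (Kset G)" by blast
  then obtain u where u: "0 \<le> u" "u \<le> 1" "q = (1 - u) *\<^sub>R z + u *\<^sub>R p" by (auto simp: in_segment)
  have "Re q = (1 - u) * Re z + u * Re z" using u(3) by (simp add: p_def)
  then have "Re q = Re z" by (simp add: algebra_simps)
  moreover have "Im q > 0"
  proof -
    have "Im q = (1 - u) * Im z + u * Y" using u by (simp add: p_def)
    moreover have "(1 - u) * Im z + u * Y \<ge> (1 - u) * min (Im z) Y + u * min (Im z) Y"
      using u by (intro add_mono mult_left_mono) auto
    moreover have "(1 - u) * min (Im z) Y + u * min (Im z) Y = min (Im z) Y" by (simp add: algebra_simps)
    moreover have "min (Im z) Y > 0" using zu Ypos by simp
    ultimately show ?thesis by linarith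
  qed
  ultimately have "q \<in> bdryH (Kset G)" "Re q = Re z" using q by (auto simp: bdryH_def uhp_def)
  then show False using ha hb out by fastforce
qed

lemma closure_K_ge:
  assumes g: "g \<in> G" "\<not> is_id_psl g" "mc g \<noteq> 0" and z: "z \<in> closure (Kset G)"
  shows "1 \<le> cmod (jf g z)"
proof -
  have cl: "closed {z. 1 \<le> cmod (jf g z)}"
    by (rule closed_Collect_le) (auto simp: jf_def intro!: continuous_intros)
  have "Kset G \<subseteq> {z. 1 \<le> cmod (jf g z)}" using g by (auto simp: Kset_mem less_imp_le)
  then have "closure (Kset G) \<subseteq> {z. 1 \<le> cmod (jf g z)}" using cl by (rule closure_minimal)
  then show ?thesis using z by blast
qed



lemma isom_sphere_mem: "z \<in> isom_sphere g \<longleftrightarrow> z \<in> uhp \<and> cmod (jf g z) = 1"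
  by (simp add: isom_sphere_def jf_def)

lemma open_strip: "open {z::complex. a < Re z \<and> Re z < b}"
  by (intro open_Collect_conj open_Collect_less) (auto intro: continuous_intros)

lemma closed_strip: "closed {z::complex. a \<le> Re z \<and> Re z \<le> b}"
  by (intro closed_Collect_conj closed_Collect_le) (auto intro: continuous_intros)

lemma bdry_K_W:
  assumes "z \<in> bdryH K" "a < Re z" "Re z < b"
  shows "z \<in> bdryH (K \<inter> {z. a < Re z \<and> Re z < b})"
proof -
  let ?S = "{z::complex. a < Re z \<and> Re z < b}"
  have zS: "z \<in> ?S" using assms by simp
  have "z \<in> closure K" "z \<notin> interior K" "z \<in> uhp" using assms(1) by (auto simp: bdryH_def frontier_def)
  have "z \<in> closure (?S \<inter> K)" using open_Int_closure_subset[OF open_strip, of a b K] zS \<open>z \<in> closure K\<close> by blast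
  moreover have "z \<notin> interior (K \<inter> ?S)" using \<open>z \<notin> interior K\<close> interior_mono[of "K \<inter> ?S" K] by blast
  ultimately show ?thesis using \<open>z \<in> uhp\<close> by (auto simp: bdryH_def frontier_def Int_commute)
qed

lemma bdry_W_K:
  assumes "z \<in> bdryH (K \<inter> {z. a < Re z \<and> Re z < b})"
  shows "z \<in> closure K" "z \<in> uhp" "a \<le> Re z" "Re z \<le> b"
    "a < Re z \<Longrightarrow> Re z < b \<Longrightarrow> z \<in> bdryH K"
proof -
  let ?S = "{z::complex. a < Re z \<and> Re z < b}"
  have zc: "z \<in> closure (K \<inter> ?S)" and zi: "z \<notin> interior (K \<inter> ?S)" and zu: "z \<in> uhp"
    using assms by (auto simp: bdryH_def frontier_def)
  show "z \<in> closure K" using zc closure_mono[of "K \<inter> ?S" K] by blast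
  show "z \<in> uhp" by (rule zu)
  have "closure (K \<inter> ?S) \<subseteq> {z. a \<le> Re z \<and> Re z \<le> b}"
    by (rule closure_minimal[OF _ closed_strip]) auto
  then show "a \<le> Re z" "Re z \<le> b" using zc by auto
  assume "a < Re z" "Re z < b"
  have "z \<notin> interior K"
  proof
    assume "z \<in> interior K"
    moreover have "interior K \<inter> ?S \<subseteq> interior (K \<inter> ?S)"
      by (rule interior_maximal) (auto intro: open_Int open_strip interior_subset[THEN subsetD])
    ultimately show False using zi \<open>a < Re z\<close> \<open>Re z < b\<close> by blast
  qed
  then show "z \<in> bdryH K" using \<open>z \<in> closure K\<close> zu by (auto simp: bdryH_def frontier_def)
qed

theorem lemma4p7:
  fixes G :: "mat2 set" and \<alpha> \<beta> \<alpha>' \<beta>' :: real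
  assumes "fuchsian_group G"
    and "geometrically_finite G"
    and "\<not> cocompact G"
    and "\<exists>g\<in>G. hyperbolic_elt g"
    and "\<forall>g\<in>G. \<not> parabolic_elt g"
    and "quotient_infinite_area G"
    and "ordinary_set_nbhd_infty G"
    and "\<forall>z\<in>bdryH (Kset G). \<alpha> \<le> Re z"
    and "\<forall>a. (\<forall>z\<in>bdryH (Kset G). a \<le> Re z) \<longrightarrow> a \<le> \<alpha>"
    and "\<forall>z\<in>bdryH (Kset G). Re z \<le> \<beta>"
    and "\<forall>b. (\<forall>z\<in>bdryH (Kset G). Re z \<le> b) \<longrightarrow> \<beta> \<le> b"
    and "\<alpha>' < \<alpha>" and "\<beta> < \<beta>'"
  shows "REL G = REL_W G \<alpha>' \<beta>'"
proof -
  note fg = assms(1) and np = assms(5) and ord = assms(7) and ha = assms(8) and hb = assms(10)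
  note a = assms(12) and b = assms(13)
  define K where "K = Kset G"
  define l where "l = \<beta>' - \<alpha>'"
  obtain M where Mb: "\<forall>g\<in>G. cmod (mob g \<i>) \<le> M" using orbit_bound[OF ord] by blast
  have cnz: "mc g \<noteq> 0" if "g \<in> G" "\<not> is_id_psl g" for g using c_nonzero[OF fg np Mb that] .
  have H4: "\<forall>z\<in>uhp. Re z < \<alpha> \<or> Re z > \<beta> \<longrightarrow> z \<in> K"
    unfolding K_def using K_outside[OF fg np ord ha hb] by blast
  have H2: "\<forall>g\<in>G. \<not> is_id_psl g \<longrightarrow> (\<forall>z\<in>K. cmod (jf g z) > 1)"
    using cnz by (auto simp: K_def Kset_mem)
  have H3: "\<forall>g\<in>G. \<not> is_id_psl g \<longrightarrow> (\<forall>z\<in>closure K \<inter> uhp. cmod (jf g z) \<ge> 1)"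
    using cnz closure_K_ge unfolding K_def by blast
  have H5: "\<forall>g\<in>G. \<not> is_id_psl g \<longrightarrow> (\<forall>z\<in>closure K \<inter> uhp. \<alpha> \<le> Re (mob g z) \<and> Re (mob g z) \<le> \<beta>)"
  proof (intro ballI impI)
    fix g z assume g: "g \<in> G" "\<not> is_id_psl g" and z: "z \<in> closure K \<inter> uhp"
    have gS: "g \<in> SL2" using fg_SL2[OF fg g(1)] .
    have zu: "Im z > 0" using z by (simp add: uhp_def)
    have w: "mob g z \<in> uhp" using mob_uhp[OF gS] z by blast
    have j1: "cmod (jf g z) \<ge> 1" using H3 g z by blast
    have "cmod (jf (minv g) (mob g z)) * cmod (jf g z) = 1"
      using jf_minv_mob[OF gS zu] by (metis norm_mult norm_one)
    then have "cmod (jf (minv g) (mob g z)) \<le> 1" using j1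
      by (metis mult_le_cancel_left1 norm_ge_zero order.trans linorder_not_le less_le_trans zero_less_one order_less_imp_le mult_cancel_left1 mult.commute)
    moreover have "minv g \<in> G" "\<not> is_id_psl (minv g)" using fg_minv[OF fg g(1)] g(2) by (auto simp: is_id_psl_minv)
    ultimately have "mob g z \<notin> K" using H2 by fastforce
    then show "\<alpha> \<le> Re (mob g z) \<and> Re (mob g z) \<le> \<beta>" using H4 w by fastforce
  qed
  have "bdryH K \<noteq> {}"
  proof
    assume "bdryH K = {}"
    then have "\<alpha> + 1 \<le> \<alpha>" using assms(9) unfolding K_def by blast
    then show False by simp
  qed
  then obtain z0 where "z0 \<in> bdryH K" by blast
  then have ab: "\<alpha> \<le> \<beta>" using ha hb unfolding K_def by force
  have lpos: "0 < l" using a b ab by (simp add: l_def)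
  have KU: "K \<subseteq> uhp" unfolding K_def by (rule Kset_uhp)
  note dyn = nf_dyn[OF fg KU H2 H3 H4 H5 a b l_def lpos]
  have Wdef: "Wset G \<alpha>' \<beta>' = K \<inter> {z. \<alpha>' < Re z \<and> Re z < \<beta>'}" by (simp add: Wset_def K_def)
  show ?thesis
  proof
    show "REL G \<subseteq> REL_W G \<alpha>' \<beta>'"
    proof
      fix x assume "x \<in> REL G"
      then obtain g where x: "x = isom_sphere g" and g: "g \<in> Gamma_REL G" by (auto simp: REL_def)
      have gG: "g \<in> G" "\<not> is_id_psl g" "mc g \<noteq> 0" using g by (auto simp: Gamma_REL_def)
      obtain z1 z2 where z: "z1 \<in> isom_sphere g" "z1 \<in> bdryH K" "z2 \<in> isom_sphere g" "z2 \<in> bdryH K" "z1 \<noteq> z2"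
        using g by (auto simp: Gamma_REL_def more_than_one_def K_def)
      have "z1 \<in> bdryH (Wset G \<alpha>' \<beta>')" "z2 \<in> bdryH (Wset G \<alpha>' \<beta>')"
        unfolding Wdef using z ha hb a b unfolding K_def[symmetric]
        by (intro bdry_K_W; force)+
      then have "more_than_one (isom_sphere g \<inter> bdryH (Wset G \<alpha>' \<beta>'))"
        using z by (auto simp: more_than_one_def)
      moreover have "g \<in> Gamma_W G \<alpha>' \<beta>'" using g by (simp add: Gamma_W_def gen_base)
      ultimately show "x \<in> REL_W G \<alpha>' \<beta>'" unfolding REL_W_def using x gG by blast
    qed
  next
    show "REL_W G \<alpha>' \<beta>' \<subseteq> REL G"
    proof
      fix x assume "x \<in> REL_W G \<alpha>' \<beta>'"
      then obtain w where x: "x = isom_sphere w" and wW: "w \<in> Gamma_W G \<alpha>' \<beta>'" and wc: "mc w \<noteq> 0"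
        and mto: "more_than_one (isom_sphere w \<inter> bdryH (Wset G \<alpha>' \<beta>'))"
        by (auto simp: REL_W_def)
      obtain z1 z2 where z: "z1 \<in> isom_sphere w" "z1 \<in> bdryH (Wset G \<alpha>' \<beta>')"
          "z2 \<in> isom_sphere w" "z2 \<in> bdryH (Wset G \<alpha>' \<beta>')" "z1 \<noteq> z2"
        using mto by (auto simp: more_than_one_def)
      have S: "\<forall>s\<in>insert (translation l) (Gamma_REL G). s \<in> G \<and> \<not> is_id_psl s \<or> s = translation l"
        by (auto simp: Gamma_REL_def)
      have wg: "w \<in> gen_group (insert (translation l) (Gamma_REL G))"
        using wW by (simp add: Gamma_W_def l_def)
      obtain i where nfw: "nf G l i w"
        using gen_group_nf[OF fg S wg] by blast
      note dw = dyn[OF nfw]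
      have z1W: "z1 \<in> closure K" "z1 \<in> uhp" "\<alpha>' \<le> Re z1" "Re z1 \<le> \<beta>'"
        using bdry_W_K[OF z(2)[unfolded Wdef]] by auto
      have j1: "cmod (jf w z1) = 1" using z(1) by (simp add: isom_sphere_mem)
      have "i \<noteq> 0"
      proof
        assume "i = 0"
        then obtain t where "w = translation t \<or> w = mneg (translation t)" using nf0_cases nfw by blast
        then show False using wc by auto
      qed
      moreover have "i \<noteq> 2" using dw z1W j1 by auto
      moreover have "i \<le> 2" using nf_le2[OF nfw] .
      ultimately have i1: "i = 1" by linarith
      then obtain g where g: "g \<in> G" "\<not> is_id_psl g" "mc g = mc w" "md g = md w"
        using dw z1W j1 by force
      have sph: "isom_sphere g = isom_sphere w" by (simp add: isom_sphere_def g)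
      have inK: "zz \<in> bdryH K" if zz: "zz \<in> isom_sphere w" "zz \<in> bdryH (Wset G \<alpha>' \<beta>')" for zz
      proof -
        note zb = bdry_W_K[OF zz(2)[unfolded Wdef]]
        have jz: "cmod (jf g zz) = 1" using zz(1) g(3,4) by (simp add: isom_sphere_mem jf_def)
        have "zz \<notin> K" if "Re zz < \<alpha> \<or> Re zz > \<beta>" 
          using H2 g jz that by fastforce
        then have "\<not> (Re zz < \<alpha> \<or> Re zz > \<beta>)" using H4 zb(2) by blast
        then have "\<alpha>' < Re zz" "Re zz < \<beta>'" using a b by auto
        then show ?thesis using zb(5) by blast
      qed
      have "more_than_one (isom_sphere g \<inter> bdryH (Kset G))"
        using inK[OF z(1,2)] inK[OF z(3,4)] z sph by (auto simp: more_than_one_def K_def)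
      then have "g \<in> Gamma_REL G" using g cnz[OF g(1,2)] by (simp add: Gamma_REL_def)
      then show "x \<in> REL G" using x sph by (auto simp: REL_def)
    qed
  qed
qed

end
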